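(* Let $f:\mathbb{R}^n\to\mathbb{R}$ be a continuously differentiable convex function, and $s$ a positive integer. Let $h(x)=\sum_{i=1}^n h_i(x_i)$ with each $h_i:\mathbb{R}\to\mathbb{R}$ convex and continuously differentiable, with $h$ supercoercive ($\lim_{\|x\|\to\infty}h(x)/\|x\|=\infty$), and assume: (i) if $x_k\to x$ then $D_h(x,x_k)\to0$; (ii) if $D_h(x,x_k)\to0$ for some $x$, then $x_k\to x$; (iii) if $D_h(x_{k+1},x_k)\to0$ then $\|x_{k+1}-x_k\|\to0$ (for all sequences $(x_k)$ in $\mathbb{R}^n$). Assume $L_hh-f$ is convex for some $L_h>0$ and $L>L_h$. Let $(x_k)$ be generated by the BPG algorithm with $h$ and $L$. If $(x_k)$ has a limit point $\bar x$ with $\|\bar x\|_0=s$, then the entire sequence $(x_k)$ converges to $\bar x$.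
   Context: $C_s=\{x\in\mathbb{R}^n:\|x\|_0\le s\}$ where $\|x\|_0$ is the number of nonzero entries. $D_h(y,x)=h(y)-h(x)-\nabla h(x)^T(y-x)$. BPG algorithm: start from $x_0\in C_s$ and for $k\ge0$ pick $x_{k+1}\in\operatorname{argmin}_{x\in C_s}\ \nabla f(x_k)^T(x-x_k)+LD_h(x,x_k)$. *)

theory Defs
  imports "HOL-Analysis.Analysis"
begin

definition l0 :: "real ^ 'n \<Rightarrow> nat" where
  "l0 x = card {i. x $ i \<noteq> 0}"

definition sparse_set :: "nat \<Rightarrow> (real ^ 'n) set" where
  "sparse_set s = {x. l0 x \<le> s}"

definition bregman :: "(real ^ 'n \<Rightarrow> real) \<Rightarrow> (real ^ 'n \<Rightarrow> real ^ 'n)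
    \<Rightarrow> real ^ 'n \<Rightarrow> real ^ 'n \<Rightarrow> real" where
  "bregman h gh y x = h y - h x - gh x \<bullet> (y - x)"

definition is_BPG_sequence :: "nat \<Rightarrow> (real ^ 'n \<Rightarrow> real ^ 'n) \<Rightarrow> (real ^ 'n \<Rightarrow> real)
    \<Rightarrow> (real ^ 'n \<Rightarrow> real ^ 'n) \<Rightarrow> real \<Rightarrow> (nat \<Rightarrow> real ^ 'n) \<Rightarrow> bool" where
  "is_BPG_sequence s gf h gh L x \<longleftrightarrow>
     x 0 \<in> sparse_set s \<and>
     (\<forall>k. x (Suc k) \<in> sparse_set s \<and>
          (\<forall>y \<in> sparse_set s.
             gf (x k) \<bullet> (x (Suc k) - x k) + L * bregman h gh (x (Suc k)) (x k)
             \<le> gf (x k) \<bullet> (y - x k) + L * bregman h gh y (x k)))"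

end

theory Submission
  imports Defs
begin

lemma line_convex:
  fixes phi :: "'a::real_vector \<Rightarrow> real"
  assumes "convex_on UNIV phi"
  shows "convex_on UNIV (\<lambda>t::real. phi (z + t *\<^sub>R d))"
proof (rule convex_onI)
  fix t a b :: real assume t: "0 < t" "t < 1"
  have "z + ((1 - t) *\<^sub>R a + t *\<^sub>R b) *\<^sub>R d = (1 - t) *\<^sub>R (z + a *\<^sub>R d) + t *\<^sub>R (z + b *\<^sub>R d)"
    by (simp add: algebra_simps)
  then show "phi (z + ((1 - t) *\<^sub>R a + t *\<^sub>R b) *\<^sub>R d) \<le> (1 - t) * phi (z + a *\<^sub>R d) + t * phi (z + b *\<^sub>R d)"
    using convex_onD[OF assms, of t] t by simp
qed simp

lemma tangent1:
  fixes g :: "real \<Rightarrow> real"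
  assumes "convex_on UNIV g" "(g has_real_derivative g') (at 0)"
  shows "g 1 \<ge> g 0 + g'"
  using convex_on_imp_above_tangent[OF assms(1), where c=0 and x=1 and f'=g'] assms(2) by simp

lemma hs_line_deriv:
  assumes "\<And>t. (hs has_real_derivative dhs t) (at t)"
  shows "((\<lambda>t. hs (a + t * d)) has_real_derivative dhs (a + t * d) * d) (at t)"
proof -
  have "((\<lambda>t. a + t * d) has_real_derivative d) (at t)"
    by (auto intro!: derivative_eq_intros)
  from DERIV_chain2[OF assms this] show ?thesis .
qed

lemma h_line_deriv:
  fixes hs :: "'n::finite \<Rightarrow> real \<Rightarrow> real"
  assumes "\<And>i t. (hs i has_real_derivative dhs i t) (at t)"
  shows "((\<lambda>t. (\<Sum>i\<in>UNIV. hs i ((a + t *\<^sub>R d) $ i))) has_real_derivative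
            (\<chi> i. dhs i (a $ i)) \<bullet> d) (at 0)"
proof -
  have "((\<lambda>t. (\<Sum>i\<in>UNIV. hs i (a $ i + t * d $ i))) has_real_derivative
            (\<Sum>i\<in>UNIV. dhs i (a $ i + 0 * d $ i) * d $ i)) (at 0)"
    by (rule DERIV_sum) (rule hs_line_deriv[OF assms])
  then show ?thesis by (simp add: inner_vec_def mult.commute)
qed

lemma breg_nonneg:
  fixes hs :: "'n::finite \<Rightarrow> real \<Rightarrow> real"
  assumes "\<And>i t. (hs i has_real_derivative dhs i t) (at t)"
    and "\<And>i. convex_on UNIV (hs i)"
  shows "bregman (\<lambda>z. \<Sum>i\<in>UNIV. hs i (z $ i)) (\<lambda>z. \<chi> i. dhs i (z $ i)) y x \<ge> 0"
proof -
  have "bregman (\<lambda>z. \<Sum>i\<in>UNIV. hs i (z $ i)) (\<lambda>z. \<chi> i. dhs i (z $ i)) y x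
     = (\<Sum>i\<in>UNIV. hs i (y $ i) - hs i (x $ i) - dhs i (x $ i) * (y $ i - x $ i))"
    by (simp add: bregman_def inner_vec_def sum_subtractf)
  also have "\<dots> \<ge> 0"
  proof (rule sum_nonneg)
    fix i
    have "hs i (y $ i) - hs i (x $ i) \<ge> dhs i (x $ i) * (y $ i - x $ i)"
      using convex_on_imp_above_tangent[OF assms(2), where c="x $ i" and x="y $ i" and f'="dhs i (x $ i)"] assms(1)
      by simp
    then show "0 \<le> hs i (y $ i) - hs i (x $ i) - dhs i (x $ i) * (y $ i - x $ i)" by simp
  qed
  finally show ?thesis .
qed

lemma dec_subseq_lim:
  fixes a :: "nat \<Rightarrow> real"
  assumes dec: "\<And>k. k \<ge> N \<Longrightarrow> a (Suc k) \<le> a k"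
    and r: "strict_mono r" and lim: "(a \<circ> r) \<longlonglongrightarrow> l"
  shows "a \<longlonglongrightarrow> l"
proof -
  have mono: "a m \<le> a k" if "N \<le> k" "k \<le> m" for k m
    using that(2,1)
  proof (induction m rule: dec_induct)
    case base then show ?case by simp
  next
    case (step m) then show ?case using dec[of m] by simp
  qed
  have lower: "l \<le> a k" if "N \<le> k" for k
  proof (rule LIMSEQ_le_const2[OF lim])
    show "\<exists>M. \<forall>j\<ge>M. (a \<circ> r) j \<le> a k"
      using mono[OF that] seq_suble[OF r] by (metis comp_apply le_trans)
  qed
  show ?thesis
  proof (rule LIMSEQ_I)
    fix e :: real assume e: "e > 0"
    from LIMSEQ_D[OF lim e] obtain M where M: "\<And>j. j \<ge> M \<Longrightarrow> norm ((a \<circ> r) j - l) < e" by blast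
    define j where "j = max M N"
    have rj: "r j \<ge> N" using seq_suble[OF r, of j] by (simp add: j_def)
    have "\<forall>k\<ge>r j. norm (a k - l) < e"
    proof (intro allI impI)
      fix k assume k: "k \<ge> r j"
      have "a k \<le> a (r j)" using mono[OF rj k] .
      moreover have "a (r j) - l < e" using M[of j] by (simp add: j_def)
      moreover have "l \<le> a k" using lower rj k by simp
      ultimately show "norm (a k - l) < e" by simp
    qed
    then show "\<exists>no. \<forall>k\<ge>no. norm (a k - l) < e" by blast
  qed
qed


lemma VS_sparse:
  fixes xbar y :: "real ^ 'n::finite"
  assumes "l0 xbar = s" "\<forall>i. xbar $ i = 0 \<longrightarrow> y $ i = 0"
  shows "y \<in> sparse_set s"
proof -
  have "{i. y $ i \<noteq> 0} \<subseteq> {i. xbar $ i \<noteq> 0}" using assms(2) by auto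
  then have "card {i. y $ i \<noteq> 0} \<le> card {i. xbar $ i \<noteq> 0}" by (intro card_mono) auto
  then show ?thesis using assms(1) by (simp add: sparse_set_def l0_def)
qed

lemma nbhd:
  fixes xbar :: "real ^ 'n::finite"
  assumes "l0 xbar = s"
  shows "\<exists>e>0. \<forall>y\<in>sparse_set s. dist y xbar < e \<longrightarrow> (\<forall>i. xbar $ i = 0 \<longrightarrow> y $ i = 0)"
proof -
  define S where "S = {i. xbar $ i \<noteq> 0}"
  define e where "e = (if S = {} then 1 else Min ((\<lambda>i. \<bar>xbar $ i\<bar>) ` S))"
  have fin: "finite S" by simp
  have epos: "e > 0" using fin by (auto simp: e_def S_def)
  have ele: "e \<le> \<bar>xbar $ i\<bar>" if "i \<in> S" for i
    using that fin by (auto simp: e_def)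
  have "\<forall>y\<in>sparse_set s. dist y xbar < e \<longrightarrow> (\<forall>i. xbar $ i = 0 \<longrightarrow> y $ i = 0)"
  proof (intro ballI impI allI)
    fix y i assume y: "y \<in> sparse_set s" and d: "dist y xbar < e" and xi: "xbar $ i = 0"
    have sub: "S \<subseteq> {i. y $ i \<noteq> 0}"
    proof
      fix j assume j: "j \<in> S"
      have "\<bar>(y - xbar) $ j\<bar> \<le> norm (y - xbar)" by (rule component_le_norm_cart)
      then have "\<bar>y $ j - xbar $ j\<bar> < \<bar>xbar $ j\<bar>" using d ele[OF j] by (simp add: dist_norm)
      then show "j \<in> {i. y $ i \<noteq> 0}" by auto
    qed
    have "card {i. y $ i \<noteq> 0} \<le> card S" using y assms by (simp add: sparse_set_def l0_def S_def)
    then have "S = {i. y $ i \<noteq> 0}" using card_seteq[OF _ sub] by simp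
    then show "y $ i = 0" using xi by (auto simp: S_def)
  qed
  then show ?thesis using epos by blast
qed

lemma f_line_deriv:
  assumes "\<And>z. (f has_derivative (\<lambda>v. gf z \<bullet> v)) (at z)"
  shows "((\<lambda>t. f (a + t *\<^sub>R d)) has_real_derivative gf a \<bullet> d) (at 0)"
proof -
  have l: "((\<lambda>t::real. a + t *\<^sub>R d) has_derivative (\<lambda>t. t *\<^sub>R d)) (at 0)"
    by (auto intro!: derivative_eq_intros)
  have "((\<lambda>t. f (a + t *\<^sub>R d)) has_derivative (\<lambda>t. gf (a + 0 *\<^sub>R d) \<bullet> (t *\<^sub>R d))) (at 0)"
    by (rule has_derivative_compose[OF l assms])
  moreover have "(\<lambda>t. gf (a + 0 *\<^sub>R d) \<bullet> (t *\<^sub>R d)) = (*) (gf a \<bullet> d)"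
    by (auto simp: mult.commute)
  ultimately show ?thesis
    by (simp add: has_field_derivative_def)
qed

theorem theoremA4:
  fixes f :: "real ^ 'n \<Rightarrow> real"
    and gf :: "real ^ 'n \<Rightarrow> real ^ 'n"
    and hs :: "'n \<Rightarrow> real \<Rightarrow> real"
    and dhs :: "'n \<Rightarrow> real \<Rightarrow> real"
    and s :: nat
    and Lh L :: real
    and x :: "nat \<Rightarrow> real ^ 'n"
    and xbar :: "real ^ 'n"
  defines "h \<equiv> (\<lambda>z. \<Sum>i\<in>UNIV. hs i (z $ i))"
    and "gh \<equiv> (\<lambda>z. \<chi> i. dhs i (z $ i))"
  assumes f_deriv: "\<And>z. (f has_derivative (\<lambda>v. gf z \<bullet> v)) (at z)"
    and gf_cont: "continuous_on UNIV gf"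
    and f_convex: "convex_on UNIV f"
    and s_pos: "s > 0"
    and hs_deriv: "\<And>i t. (hs i has_real_derivative dhs i t) (at t)"
    and dhs_cont: "\<And>i. continuous_on UNIV (dhs i)"
    and hs_convex: "\<And>i. convex_on UNIV (hs i)"
    and h_supercoercive: "filterlim (\<lambda>z. h z / norm z) at_top at_infinity"
    and cond_i: "\<And>(y :: nat \<Rightarrow> real ^ 'n) z. y \<longlonglongrightarrow> z \<Longrightarrow>
                   (\<lambda>k. bregman h gh z (y k)) \<longlonglongrightarrow> 0"
    and cond_ii: "\<And>(y :: nat \<Rightarrow> real ^ 'n) z. (\<lambda>k. bregman h gh z (y k)) \<longlonglongrightarrow> 0 \<Longrightarrow>
                   y \<longlonglongrightarrow> z"
    and cond_iii: "\<And>(y :: nat \<Rightarrow> real ^ 'n).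
                   (\<lambda>k. bregman h gh (y (Suc k)) (y k)) \<longlonglongrightarrow> 0 \<Longrightarrow>
                   (\<lambda>k. norm (y (Suc k) - y k)) \<longlonglongrightarrow> 0"
    and Lh_pos: "Lh > 0"
    and rel_smooth: "convex_on UNIV (\<lambda>z. Lh * h z - f z)"
    and L_gt: "L > Lh"
    and bpg: "is_BPG_sequence s gf h gh L x"
    and limpt: "\<exists>r. strict_mono r \<and> (x \<circ> r) \<longlonglongrightarrow> xbar"
    and xbar_l0: "l0 xbar = s"
  shows "x \<longlonglongrightarrow> xbar"
proof -
  define D where "D = bregman h gh"
  have Dnn: "\<And>y z. D y z \<ge> 0"
    unfolding D_def h_def gh_def by (rule breg_nonneg[OF hs_deriv hs_convex])
  have hline: "\<And>a d. ((\<lambda>t. h (a + t *\<^sub>R d)) has_real_derivative gh a \<bullet> d) (at 0)"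
    unfolding h_def gh_def by (rule h_line_deriv[OF hs_deriv])
  have ftan: "\<And>y z. f y \<ge> f z + gf z \<bullet> (y - z)"
  proof -
    fix y z
    have "(\<lambda>t. f (z + t *\<^sub>R (y - z))) 1 \<ge> (\<lambda>t. f (z + t *\<^sub>R (y - z))) 0 + gf z \<bullet> (y - z)"
      by (rule tangent1[OF line_convex[OF f_convex] f_line_deriv[OF f_deriv]])
    then show "f y \<ge> f z + gf z \<bullet> (y - z)" by simp
  qed
  have fsm: "\<And>y z. f y \<le> f z + gf z \<bullet> (y - z) + Lh * D y z"
  proof -
    fix y z
    have dd: "((\<lambda>t. Lh * h (z + t *\<^sub>R (y - z)) - f (z + t *\<^sub>R (y - z))) has_real_derivative
       Lh * (gh z \<bullet> (y - z)) - gf z \<bullet> (y - z)) (at 0)"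
      by (intro DERIV_diff DERIV_cmult hline f_line_deriv[OF f_deriv])
    have "(\<lambda>t. Lh * h (z + t *\<^sub>R (y - z)) - f (z + t *\<^sub>R (y - z))) 1 \<ge>
      (\<lambda>t. Lh * h (z + t *\<^sub>R (y - z)) - f (z + t *\<^sub>R (y - z))) 0 + (Lh * (gh z \<bullet> (y - z)) - gf z \<bullet> (y - z))"
      by (rule tangent1[OF line_convex[OF rel_smooth] dd])
    then show "f y \<le> f z + gf z \<bullet> (y - z) + Lh * D y z"
      by (simp add: D_def bregman_def algebra_simps)
  qed
  have xs: "\<And>k. x k \<in> sparse_set s" using bpg unfolding is_BPG_sequence_def by (metis not0_implies_Suc)
  have xmin: "\<And>k y. y \<in> sparse_set s \<Longrightarrow>
     gf (x k) \<bullet> (x (Suc k) - x k) + L * D (x (Suc k)) (x k) \<le> gf (x k) \<bullet> (y - x k) + L * D y (x k)"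
    using bpg unfolding is_BPG_sequence_def D_def by blast
  have decr: "\<And>k. f (x (Suc k)) \<le> f (x k) - (L - Lh) * D (x (Suc k)) (x k)"
  proof -
    fix k
    have "gf (x k) \<bullet> (x (Suc k) - x k) + L * D (x (Suc k)) (x k) \<le> 0"
      using xmin[OF xs[of k], of k] by (simp add: D_def bregman_def)
    then show "f (x (Suc k)) \<le> f (x k) - (L - Lh) * D (x (Suc k)) (x k)"
      using fsm[of "x (Suc k)" "x k"] by (simp add: algebra_simps)
  qed
  have fdec: "\<And>k. f (x (Suc k)) \<le> f (x k)"
    using decr Dnn L_gt by (smt (verit) mult_nonneg_nonneg)
  obtain r where r: "strict_mono r" and rlim: "(x \<circ> r) \<longlonglongrightarrow> xbar" using limpt by blast
  have fcont: "\<And>z. isCont f z" using f_deriv has_derivative_continuous by blast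
  have "((\<lambda>k. f (x k)) \<circ> r) \<longlonglongrightarrow> f xbar"
    using isCont_tendsto_compose[OF fcont rlim] by (simp add: o_def)
  then have flim: "(\<lambda>k. f (x k)) \<longlonglongrightarrow> f xbar"
    by (rule dec_subseq_lim[where N=0 and a="\<lambda>k. f (x k)", OF fdec r])
  have flow: "\<And>k. f xbar \<le> f (x k)"
    by (rule decseq_ge[OF _ flim]) (simp add: decseq_Suc_iff fdec)
  have Dstep: "(\<lambda>k. D (x (Suc k)) (x k)) \<longlonglongrightarrow> 0"
  proof (rule tendsto_sandwich[where f="\<lambda>k. 0" and h="\<lambda>k. (f (x k) - f (x (Suc k))) / (L - Lh)"])
    show "\<forall>\<^sub>F k in sequentially. 0 \<le> D (x (Suc k)) (x k)" using Dnn by simp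
    show "\<forall>\<^sub>F k in sequentially. D (x (Suc k)) (x k) \<le> (f (x k) - f (x (Suc k))) / (L - Lh)"
      using decr L_gt by (simp add: field_simps mult.commute)
    have "(\<lambda>k. f (x (Suc k))) \<longlonglongrightarrow> f xbar" using flim by (rule LIMSEQ_Suc)
    then have "(\<lambda>k. (f (x k) - f (x (Suc k))) / (L - Lh)) \<longlonglongrightarrow> (f xbar - f xbar) / (L - Lh)"
      using L_gt by (intro tendsto_intros flim) auto
    then show "(\<lambda>k. (f (x k) - f (x (Suc k))) / (L - Lh)) \<longlonglongrightarrow> 0" by simp
  qed simp
  have steplim: "(\<lambda>k. norm (x (Suc k) - x k)) \<longlonglongrightarrow> 0"
    using cond_iii Dstep unfolding D_def by blast
  obtain e where e: "e > 0" and enb: "\<And>y. y \<in> sparse_set s \<Longrightarrow> dist y xbar < e \<Longrightarrow>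
      (\<forall>i. xbar $ i = 0 \<longrightarrow> y $ i = 0)"
    using nbhd[OF xbar_l0] by blast
  have "\<exists>\<delta>>0. \<forall>y. D xbar y < \<delta> \<longrightarrow> dist y xbar < e / 2"
  proof (rule ccontr)
    assume "\<not> ?thesis"
    then have "\<forall>n::nat. \<exists>y. D xbar y < 1 / Suc n \<and> dist y xbar \<ge> e / 2"
      by (metis not_less of_nat_0_less_iff zero_less_Suc zero_less_divide_1_iff)
    then obtain Y where Y: "\<And>n. D xbar (Y n) < 1 / Suc n" "\<And>n. dist (Y n) xbar \<ge> e / 2" by metis
    have "(\<lambda>n. D xbar (Y n)) \<longlonglongrightarrow> 0"
    proof (rule tendsto_sandwich[where f="\<lambda>k. 0" and h="\<lambda>n. 1 / Suc n"])
      show "\<forall>\<^sub>F k in sequentially. 0 \<le> D xbar (Y k)" using Dnn by simp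
      show "\<forall>\<^sub>F k in sequentially. D xbar (Y k) \<le> 1 / Suc k" using Y(1) by (simp add: less_imp_le del: of_nat_Suc)
      show "(\<lambda>n. 1 / real (Suc n)) \<longlonglongrightarrow> 0" by (rule LIMSEQ_Suc[OF lim_const_over_n])
    qed simp
    then have "Y \<longlonglongrightarrow> xbar" using cond_ii unfolding D_def by blast
    then have "\<forall>\<^sub>F n in sequentially. dist (Y n) xbar < e / 2" using e
      unfolding tendsto_iff by (meson half_gt_zero)
    then obtain n where "dist (Y n) xbar < e / 2" unfolding eventually_sequentially by blast
    then show False using Y(2)[of n] by simp
  qed
  then obtain \<delta> where dpos: "\<delta> > 0" and dclose: "\<And>y. D xbar y < \<delta> \<Longrightarrow> dist y xbar < e / 2" by blast
  obtain K where K: "\<And>k. k \<ge> K \<Longrightarrow> norm (x (Suc k) - x k) < e / 2"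
    using LIMSEQ_D[OF steplim, of "e / 2"] e by auto
  have Dsub: "((\<lambda>k. D xbar (x k)) \<circ> r) \<longlonglongrightarrow> 0"
    using cond_i[OF rlim] unfolding D_def by (simp add: o_def)
  obtain J where J: "\<And>j. j \<ge> J \<Longrightarrow> D xbar (x (r j)) < \<delta>"
    using LIMSEQ_D[OF Dsub dpos] Dnn by (auto simp: o_def)
  define k0 where "k0 = r (max J K)"
  have k0K: "k0 \<ge> K" using seq_suble[OF r, of "max J K"] by (simp add: k0_def)
  have Dk0: "D xbar (x k0) < \<delta>" using J[of "max J K"] by (simp add: k0_def)
  have descent: "D xbar (x (Suc k)) \<le> D xbar (x k)"
    if supp: "\<forall>i. xbar $ i = 0 \<longrightarrow> x (Suc k) $ i = 0" for k
  proof -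
    define a where "a = x (Suc k)"
    define b where "b = x k"
    define d where "d = xbar - a"
    define g where "g = (\<lambda>t. gf b \<bullet> (a + t *\<^sub>R d - b) + L * D (a + t *\<^sub>R d) b)"
    have ins: "a + t *\<^sub>R d \<in> sparse_set s" for t
      by (rule VS_sparse[OF xbar_l0]) (use supp in \<open>simp add: a_def d_def\<close>)
    have gmin: "g 0 \<le> g t" for t
      using xmin[OF ins[of t], of k] by (simp add: g_def a_def b_def)
    have geq: "g = (\<lambda>t. gf b \<bullet> (a - b) + t * (gf b \<bullet> d) +
        L * (h (a + t *\<^sub>R d) - h b - (gh b \<bullet> (a - b) + t * (gh b \<bullet> d))))"
      by (rule ext) (simp add: g_def D_def bregman_def inner_simps algebra_simps)
    have gder: "(g has_real_derivative (gf b \<bullet> d + L * (gh a \<bullet> d - gh b \<bullet> d))) (at 0)"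
      unfolding geq by (auto intro!: derivative_eq_intros hline)
    have opt: "gf b \<bullet> d + L * (gh a \<bullet> d - gh b \<bullet> d) = 0"
      by (rule DERIV_local_min[OF gder, of 1]) (auto intro: gmin)
    have three: "D xbar b - D xbar a - D a b = gh a \<bullet> d - gh b \<bullet> d"
      by (simp add: D_def bregman_def d_def inner_simps algebra_simps)
    have "gf b \<bullet> d = gf b \<bullet> (xbar - b) - gf b \<bullet> (a - b)"
      by (simp add: d_def inner_simps)
    also have "\<dots> \<le> (f xbar - f b) - (f a - f b - Lh * D a b)"
      using ftan[where y=xbar and z=b] fsm[where y=a and z=b] by simp
    also have "\<dots> \<le> Lh * D a b" using flow[of "Suc k"] by (simp add: a_def)
    finally have gd: "gf b \<bullet> d \<le> Lh * D a b" .
    have "L * D xbar a = L * D xbar b - L * D a b + gf b \<bullet> d"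
    proof -
      have t2: "L * (D xbar b - D xbar a - D a b) = L * (gh a \<bullet> d - gh b \<bullet> d)"
        using three by simp
      show ?thesis using t2 opt unfolding right_diff_distrib by linarith
    qed
    also have "\<dots> \<le> L * D xbar b - (L - Lh) * D a b" using gd by (simp add: algebra_simps)
    also have "\<dots> \<le> L * D xbar b" using Dnn[of a b] L_gt by simp
    finally have "L * D xbar a \<le> L * D xbar b" .
    then show ?thesis using L_gt Lh_pos by (simp add: a_def b_def)
  qed
  have inv: "D xbar (x k) \<le> D xbar (x k0)" if "k0 \<le> k" for k
    using that
  proof (induction k rule: dec_induct)
    case base then show ?case by simp
  next
    case (step k)
    have "dist (x k) xbar < e / 2" using dclose step.IH Dk0 by simp
    moreover have "norm (x (Suc k) - x k) < e / 2" using K k0K step.hyps by simp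
    ultimately have "dist (x (Suc k)) xbar < e"
      using dist_triangle[of "x (Suc k)" xbar "x k"] by (simp add: dist_norm)
    then have "\<forall>i. xbar $ i = 0 \<longrightarrow> x (Suc k) $ i = 0" using enb xs by blast
    then show ?case using descent step.IH by (meson order_trans)
  qed
  have Ddec: "\<And>k. k \<ge> k0 \<Longrightarrow> D xbar (x (Suc k)) \<le> D xbar (x k)"
  proof -
    fix k assume kk: "k \<ge> k0"
    have "dist (x k) xbar < e / 2" using dclose inv[OF kk] Dk0 by simp
    moreover have "norm (x (Suc k) - x k) < e / 2" using K k0K kk by simp
    ultimately have "dist (x (Suc k)) xbar < e"
      using dist_triangle[of "x (Suc k)" xbar "x k"] by (simp add: dist_norm)
    then have "\<forall>i. xbar $ i = 0 \<longrightarrow> x (Suc k) $ i = 0" using enb xs by blast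
    then show "D xbar (x (Suc k)) \<le> D xbar (x k)" by (rule descent)
  qed
  have "(\<lambda>k. D xbar (x k)) \<longlonglongrightarrow> 0"
    by (rule dec_subseq_lim[OF Ddec r Dsub])
  then show ?thesis using cond_ii unfolding D_def by blast
qed

end
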